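(* The family $(f_t)_{t}$, where $t$ runs over all (nonempty) planar rooted trees, is a basis of $\mathrm{Prim}(\mathcal{H})=\{x\in\mathcal{H}:\Delta(x)=x\otimes1+1\otimes x\}$.
   Context: Let $K$ be a field. Planar rooted trees have their children linearly ordered left to right; a planar forest is a finite, possibly empty, sequence $t_1\cdots t_n$ of planar rooted trees ($1$ = empty forest). $\mathcal{H}$ is the free associative unital $K$-algebra on planar rooted trees, with basis the planar forests and product concatenation, graded by weight (number of vertices). $B^+(F)$ is the tree obtained by grafting the trees of $F$ (in order) on a new common root. $\varepsilon(F)=\delta_{F,1}$. $\Delta$ is the unique linear map with $\Delta(1)=1\otimes1$, $\Delta(xy)=(x\otimes1)\Delta(y)+\Delta(x)(1\otimes y)-x\otimes y$, $\Delta(B^+(x))=B^+(x)\otimes 1+(\mathrm{Id}\otimes B^+)\Delta(x)$. $\gamma:\mathcal{H}\to\mathcal{H}$ is linear with $\gamma(t_1\cdots t_n)=\delta_{t_1,\bullet}t_2\cdots t_n$ ($\bullet$ the one-vertex tree) and $\gamma(1)=0$. $\langle-,-\rangle$ is the unique bilinear form on $\mathcal{H}$ with $\langle1,x\rangle=\varepsilon(x)$, $\langle xy,z\rangle=\langle y\otimes x,\Delta(z)\rangle$ (with $\langle a\otimes b,c\otimes d\rangle=\langle a,c\rangle\langle b,d\rangle$) and $\langle B^+(x),y\rangle=\langle x,\gamma(y)\rangle$; it is symmetric, non-degenerate, and forests of different weights are orthogonal. $(f_F)_F$ is the dual basis of the basis of forests: $\langle f_F,G\rangle=\delta_{F,G}$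 for all planar forests $G$. *)

theory Defs
  imports Main
begin

text \<open>A planar rooted tree is a root together with the ordered list of its subtrees;
  Node F is B+(F). A planar forest is a list of planar trees; [] is the empty forest 1.\<close>
datatype ptree = Node "ptree list"

type_synonym forest = "ptree list"

text \<open>Elements of H (free vector space on planar forests) are finitely supported
  coefficient functions forest => K; elements of H (x) H are finitely supported
  functions on pairs of forests (the tensor product of free modules is free on the
  product of the bases). The product of H is concatenation of forests.\<close>

definition supp :: "('a \<Rightarrow> 'k::zero) \<Rightarrow> 'a set" where
  "supp x = {a. x a \<noteq> 0}"

definition inH :: "(forest \<Rightarrow> 'k::zero) \<Rightarrow> bool" where
  "inH x \<longleftrightarrow> finite (supp x)"

definition basisv :: "'a \<Rightarrow> 'a \<Rightarrow> 'k::{zero,one}" where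
  "basisv a = (\<lambda>b. if b = a then 1 else 0)"

abbreviation dot :: ptree where "dot \<equiv> Node []"

text \<open>delta F is Delta(F) for a forest F, as an element of H (x) H:
  Delta(1) = 1 (x) 1;
  Delta(B+(F)) = B+(F) (x) 1 + (Id (x) B+) Delta(F);
  Delta(t G) = (t (x) 1) Delta(G) + Delta(t) (1 (x) G) - t (x) G  (G nonempty),
  which is the rule Delta(xy) with x = t, y = G.\<close>
function delta :: "forest \<Rightarrow> forest \<times> forest \<Rightarrow> 'k::field" where
  "delta [] = basisv ([], [])"
| "delta [Node F] =
     (\<lambda>(a, b). basisv ([Node F], []) (a, b)
        + (case b of [Node c] \<Rightarrow> delta F (a, c) | _ \<Rightarrow> 0))"
| "delta (t # s # F) =
     (\<lambda>(a, b). (case a of [] \<Rightarrow> 0 | u # a' \<Rightarrow> if u = t then delta (s # F) (a', b) else 0)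
        + (if drop (length b - length (s # F)) b = s # F \<and> length (s # F) \<le> length b
           then delta [t] (a, take (length b - length (s # F)) b) else 0)
        - basisv ([t], s # F) (a, b))"
  by pat_completeness auto
termination
  by (relation "measure (size_list size)") auto

definition Delta :: "(forest \<Rightarrow> 'k::field) \<Rightarrow> forest \<times> forest \<Rightarrow> 'k" where
  "Delta x = (\<lambda>p. \<Sum>F\<in>supp x. x F * delta F p)"

definition Prim :: "(forest \<Rightarrow> 'k::field) set" where
  "Prim = {x. inH x \<and>
     Delta x = (\<lambda>(a, b). (if b = [] then x a else 0) + (if a = [] then x b else 0))}"

text \<open>pair F G = <F, G> on basis forests:
  <1, G> = epsilon(G);  <B+(F), G> = <F, gamma(G)>, where
  gamma(t1...tn) = delta_{t1,dot} t2...tn, gamma(1) = 0;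
  <x y, z> = <y (x) x, Delta(z)> with x = t the first tree, y the remaining nonempty forest.\<close>
function pair :: "forest \<Rightarrow> forest \<Rightarrow> 'k::field" where
  "pair [] G = (if G = [] then 1 else 0)"
| "pair [Node F] G = (case G of u # G' \<Rightarrow> if u = dot then pair F G' else 0 | [] \<Rightarrow> 0)"
| "pair (t # s # F) G =
     (\<Sum>p\<in>supp (delta G :: _ \<Rightarrow> 'k). delta G p * pair (s # F) (fst p) * pair [t] (snd p))"
  by pat_completeness auto
termination
  by (relation "measure (\<lambda>(F, G). size_list size F)") auto

definition pairing :: "(forest \<Rightarrow> 'k::field) \<Rightarrow> forest \<Rightarrow> 'k" where
  "pairing x G = (\<Sum>F\<in>supp x. x F * pair F G)"

text \<open>The dual basis: f_F is the (unique, by non-degeneracy) element of H with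
  <f_F, G> = delta_{F,G} for all planar forests G.\<close>
definition fdual :: "forest \<Rightarrow> forest \<Rightarrow> 'k::field" where
  "fdual F = (THE x. inH x \<and> (\<forall>G. pairing x G = (if F = G then 1 else 0)))"

definition lincomb :: "('i \<Rightarrow> 'k::field) \<Rightarrow> ('i \<Rightarrow> 'a \<Rightarrow> 'k) \<Rightarrow> 'i set \<Rightarrow> 'a \<Rightarrow> 'k" where
  "lincomb c v T = (\<lambda>a. \<Sum>i\<in>T. c i * v i a)"

definition is_basis_of :: "('i \<Rightarrow> 'a \<Rightarrow> 'k::field) \<Rightarrow> 'i set \<Rightarrow> ('a \<Rightarrow> 'k) set \<Rightarrow> bool" where
  "is_basis_of v I S \<longleftrightarrow>
     (\<forall>i\<in>I. v i \<in> S) \<and>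
     (\<forall>T c. finite T \<longrightarrow> T \<subseteq> I \<longrightarrow> lincomb c v T = (\<lambda>_. 0) \<longrightarrow> (\<forall>i\<in>T. c i = 0)) \<and>
     (\<forall>x\<in>S. \<exists>T c. finite T \<and> T \<subseteq> I \<and> x = lincomb c v T)"

end

theory Submission
  imports Defs
begin

fun w :: "forest \<Rightarrow> nat" where
  "w [] = 0"
| "w (Node F # R) = Suc (w F + w R)"

fun cutf :: "nat \<Rightarrow> forest \<Rightarrow> forest \<times> forest" where
  "cutf i [] = ([], [])"
| "cutf i (Node F # R) =
     (if i \<le> w F then (fst (cutf i F), Node (snd (cutf i F)) # R)
      else (Node F # fst (cutf (i - Suc (w F)) R), snd (cutf (i - Suc (w F)) R)))"

lemma w_append[simp]: "w (A @ B) = w A + w B"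
  by (induction A rule: w.induct) auto

lemma w_eq_0[simp]: "w F = 0 \<longleftrightarrow> F = []"
  by (cases F rule: w.cases) auto

lemma cutf_0[simp]: "cutf 0 G = ([], G)"
  by (induction G rule: w.induct) auto

lemma cutf_w: "cutf (w G) G = (G, [])"
  by (induction G rule: w.induct) auto

lemma cutf_ge: "w G \<le> i \<Longrightarrow> cutf i G = (G, [])"
  by (induction i G rule: cutf.induct) auto

lemma w_cutf: "i \<le> w G \<Longrightarrow> w (fst (cutf i G)) = i \<and> w (snd (cutf i G)) = w G - i"
  by (induction i G rule: cutf.induct) auto

lemma cutf_append:
  "cutf i (G1 @ G2) = (if i \<le> w G1 then (fst (cutf i G1), snd (cutf i G1) @ G2)
      else (G1 @ fst (cutf (i - w G1) G2), snd (cutf (i - w G1) G2)))"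
proof (induction G1 arbitrary: i rule: w.induct)
  case 1
  then show ?case by simp
next
  case (2 F R)
  then show ?case by (auto simp: cutf_ge diff_diff_add)
qed

lemma cutf_coassoc:
  assumes "i \<le> j" "j \<le> w G"
  shows "cutf i (fst (cutf j G)) = (fst (cutf i G), fst (cutf (j - i) (snd (cutf i G))))
    \<and> snd (cutf (j - i) (snd (cutf i G))) = snd (cutf j G)"
  using assms
proof (induction G arbitrary: i j rule: w.induct)
  case 1
  then show ?case by simp
next
  case (2 F R)
  show ?case
  proof (cases "j \<le> w F")
    case True
    then show ?thesis using 2 w_cutf[of i F] by auto
  next
    case False
    note jF = False
    show ?thesis
    proof (cases "i \<le> w F")
      case True
      have e: "j - i - Suc (w F - i) = j - Suc (w F)" using True jF by simp
      show ?thesis using True jF w_cutf[of i F] e by auto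
    next
      case False
      have e: "j - Suc (w F) - (i - Suc (w F)) = j - i" using False jF by simp
      have "i - Suc (w F) \<le> j - Suc (w F)" "j - Suc (w F) \<le> w R" using 2(3,4) False jF by auto
      from "2.IH"(2)[OF this] show ?thesis using False jF e
        by (auto simp: w_cutf)
    qed
  qed
qed

definition cuts :: "forest \<Rightarrow> (forest \<times> forest) set" where
  "cuts G = (\<lambda>i. cutf i G) ` {..w G}"

lemma cuts_w: "p \<in> cuts G \<Longrightarrow> w (fst p) + w (snd p) = w G"
  unfolding cuts_def using w_cutf by fastforce

lemma finite_cuts[simp]: "finite (cuts G)"
  unfolding cuts_def by simp

lemma cuts_Nil: "cuts [] = {([], [])}"
  by (simp add: cuts_def)

lemma cuts_single: "cuts [Node F] = insert ([Node F], []) ((\<lambda>(a, c). (a, [Node c])) ` cuts F)"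
proof -
  have "cuts [Node F] = (\<lambda>i. cutf i [Node F]) ` ({..w F} \<union> {Suc (w F)})"
    by (simp add: cuts_def atMost_Suc)
  also have "\<dots> = insert (cutf (Suc (w F)) [Node F]) ((\<lambda>i. cutf i [Node F]) ` {..w F})"
    by (simp only: image_Un image_insert image_empty) auto
  also have "cutf (Suc (w F)) [Node F] = ([Node F], [])" by simp
  also have "(\<lambda>i. cutf i [Node F]) ` {..w F} = (\<lambda>(a, c). (a, [Node c])) ` cuts F"
    unfolding cuts_def image_image by (rule image_cong) (auto simp: split_beta)
  finally show ?thesis .
qed

lemma cuts_cons:
  "cuts (t # R) = ((\<lambda>(a, b). (t # a, b)) ` cuts R) \<union> ((\<lambda>(a, b). (a, b @ R)) ` cuts [t])"
proof -
  have ca: "cutf i (t # R) = (if i \<le> w [t] then (fst (cutf i [t]), snd (cutf i [t]) @ R)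
      else ([t] @ fst (cutf (i - w [t]) R), snd (cutf (i - w [t]) R)))" for i
    using cutf_append[of i "[t]" R] by simp
  show ?thesis
  proof (intro equalityI subsetI)
    fix p assume "p \<in> cuts (t # R)"
    then obtain i where i: "i \<le> w (t # R)" "p = cutf i (t # R)" by (auto simp: cuts_def)
    show "p \<in> ((\<lambda>(a, b). (t # a, b)) ` cuts R) \<union> ((\<lambda>(a, b). (a, b @ R)) ` cuts [t])"
    proof (cases "i \<le> w [t]")
      case True
      then have "p = (\<lambda>(a, b). (a, b @ R)) (cutf i [t])" using i ca by (simp add: split_beta)
      moreover have "cutf i [t] \<in> cuts [t]" using True by (auto simp: cuts_def)
      ultimately show ?thesis by blast
    next
      case False
      then have "p = (\<lambda>(a, b). (t # a, b)) (cutf (i - w [t]) R)" using i ca by (simp add: split_beta)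
      moreover have "cutf (i - w [t]) R \<in> cuts R" using False i(1)
        by (cases t) (auto simp: cuts_def)
      ultimately show ?thesis by blast
    qed
  next
    fix p assume "p \<in> ((\<lambda>(a, b). (t # a, b)) ` cuts R) \<union> ((\<lambda>(a, b). (a, b @ R)) ` cuts [t])"
    then show "p \<in> cuts (t # R)"
    proof
      assume "p \<in> (\<lambda>(a, b). (t # a, b)) ` cuts R"
      then obtain j where j: "j \<le> w R" "p = (\<lambda>(a, b). (t # a, b)) (cutf j R)"
        unfolding cuts_def image_image by blast
      show ?thesis
      proof (cases "j = 0")
        case True
        then have "p = cutf (w [t]) (t # R)" using j ca cutf_w[of "[t]"] by simp
        moreover have "w [t] \<le> w (t # R)" by (cases t) auto
        ultimately show ?thesis by (auto simp: cuts_def)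
      next
        case False
        have "p = cutf (j + w [t]) (t # R)" using j ca False by (simp add: split_beta)
        moreover have "j + w [t] \<le> w (t # R)" using j by (cases t) auto
        ultimately show ?thesis by (auto simp: cuts_def)
      qed
    next
      assume "p \<in> (\<lambda>(a, b). (a, b @ R)) ` cuts [t]"
      then obtain i where i: "i \<le> w [t]" "p = (\<lambda>(a, b). (a, b @ R)) (cutf i [t])"
        unfolding cuts_def image_image by blast
      have "p = cutf i (t # R)" using i ca by (simp add: split_beta)
      moreover have "i \<le> w (t # R)" using i by (cases t) auto
      ultimately show ?thesis by (auto simp: cuts_def)
    qed
  qed
qed

lemma cuts_snd_Nil: "(a, []) \<in> cuts G \<Longrightarrow> a = G"
proof -
  assume "(a, []) \<in> cuts G"
  then obtain i where i: "i \<le> w G" "cutf i G = (a, [])" by (auto simp: cuts_def)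
  then have "i = w G" using w_cutf[of i G] by simp
  then show ?thesis using i cutf_w[of G] by simp
qed

lemma cuts_fst_Nil: "([], b) \<in> cuts G \<Longrightarrow> b = G"
proof -
  assume "([], b) \<in> cuts G"
  then obtain i where i: "i \<le> w G" "cutf i G = ([], b)" by (auto simp: cuts_def)
  then have "i = 0" using w_cutf[of i G] by simp
  then show ?thesis using i by simp
qed

lemma cuts_Nil_in: "([], G) \<in> cuts G" "(G, []) \<in> cuts G"
  unfolding cuts_def using cutf_w[of G] by (auto intro: image_eqI[where x=0] image_eqI[where x="w G"])

lemma cuts_cons_inter:
  "((\<lambda>(a, b). (t # a, b)) ` cuts R) \<inter> ((\<lambda>(a, b). (a, b @ R)) ` cuts [t]) = {([t], R)}"
proof (intro equalityI subsetI)
  fix p assume p: "p \<in> ((\<lambda>(a, b). (t # a, b)) ` cuts R) \<inter> ((\<lambda>(a, b). (a, b @ R)) ` cuts [t])"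
  then obtain a b where ab: "(a, b) \<in> cuts R" "p = (t # a, b)" by auto
  from p obtain a' b' where ab': "(a', b') \<in> cuts [t]" "p = (a', b' @ R)" by auto
  have "w a + w b = w R" using cuts_w[OF ab(1)] by simp
  moreover have "b = b' @ R" using ab ab' by simp
  ultimately have "a = []" "b' = []" by auto
  then have "b = R" using cuts_fst_Nil ab by auto
  moreover have "a' = [t]" using ab ab' \<open>b' = []\<close> cuts_snd_Nil by auto
  ultimately show "p \<in> {([t], R)}" using ab ab' by simp
next
  fix p assume "p \<in> {([t], R)}"
  then show "p \<in> ((\<lambda>(a, b). (t # a, b)) ` cuts R) \<inter> ((\<lambda>(a, b). (a, b @ R)) ` cuts [t])"
    using cuts_Nil_in[of R] cuts_Nil_in[of "[t]"] by force
qed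

lemma drop_take_suffix:
  "(drop (length b - length R) b = R \<and> length R \<le> length b) \<longleftrightarrow> (\<exists>b'. b = b' @ R)"
  by (metis append_take_drop_id diff_diff_cancel length_append length_drop
      append_eq_conv_conj le_add2 add_diff_cancel_right')

lemma take_suffix: "b = b' @ R \<Longrightarrow> take (length b - length R) b = b'"
  by simp

lemma delta_eq: "delta G p = (if p \<in> cuts G then 1 else (0::'k::field))"
proof (induction G arbitrary: p rule: delta.induct)
  case 1
  then show ?case by (auto simp: basisv_def cuts_Nil)
next
  case (2 F)
  obtain a b where p: "p = (a, b)" by fastforce
  have "(case b of [Node c] \<Rightarrow> delta F (a, c) | _ \<Rightarrow> 0)
     = (if (a, b) \<in> (\<lambda>(a, c). (a, [Node c])) ` cuts F then 1 else (0::'k))"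
    using "2.IH" by (auto split: list.split ptree.split)
  moreover have "([Node F], []) \<notin> (\<lambda>(a, c). (a, [Node c])) ` cuts F" by auto
  ultimately show ?case using p by (auto simp: basisv_def cuts_single)
next
  case (3 t s F)
  obtain a b where p: "p = (a, b)" by fastforce
  define R where "R = s # F"
  define A where "A = (\<lambda>(a, b). (t # a, b)) ` cuts R"
  define B where "B = (\<lambda>(a, b). (a, b @ R)) ` cuts [t]"
  have T1: "(case a of [] \<Rightarrow> 0 | u # a' \<Rightarrow> if u = t then delta (s # F) (a', b) else 0)
      = (if (a, b) \<in> A then 1 else (0::'k))"
    using "3.IH"(1) unfolding A_def R_def by (cases a) auto
  have T2: "(if drop (length b - length (s # F)) b = s # F \<and> length (s # F) \<le> length b
           then delta [t] (a, take (length b - length (s # F)) b) else 0)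
      = (if (a, b) \<in> B then 1 else (0::'k))"
  proof (cases "\<exists>b'. b = b' @ R")
    case True
    then obtain b' where b': "b = b' @ R" by blast
    have memB: "(a, b) \<in> B \<longleftrightarrow> (a, b') \<in> cuts [t]" unfolding B_def using b' by auto
    have cond: "drop (length b - length (s # F)) b = s # F \<and> length (s # F) \<le> length b"
      using drop_take_suffix[of b R] True unfolding R_def by blast
    then show ?thesis using b' memB "3.IH"(2)[OF cond] unfolding R_def by simp
  next
    case False
    then have "(a, b) \<notin> B" unfolding B_def by auto
    then show ?thesis using False drop_take_suffix[of b R] unfolding R_def by auto
  qed
  have AB: "A \<inter> B = {([t], R)}" unfolding A_def B_def by (rule cuts_cons_inter)
  have C: "cuts (t # s # F) = A \<union> B" unfolding A_def B_def R_def by (rule cuts_cons)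
  have "delta (t # s # F) (a, b) = (if (a, b) \<in> A then 1 else 0) + (if (a, b) \<in> B then 1 else 0)
      - (if (a, b) = ([t], R) then 1 else (0::'k))"
    using T1 T2 by (simp add: basisv_def R_def)
  also have "\<dots> = (if (a, b) \<in> A \<union> B then 1 else 0)"
    using AB by (auto simp: set_eq_iff)
  finally show ?case using p C by simp
qed

lemma supp_delta: "supp (delta G :: _ \<Rightarrow> 'k::field) = cuts G"
  by (auto simp: supp_def delta_eq)

lemma sum_single:
  assumes "finite A" "k \<in> A" "\<And>i. i \<in> A \<Longrightarrow> i \<noteq> k \<Longrightarrow> g i = 0"
  shows "sum g A = g k"
proof -
  have "sum g A = g k + sum g (A - {k})" using assms(1,2) by (rule sum.remove)
  moreover have "sum g (A - {k}) = 0" using assms(3) by (intro sum.neutral) blast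
  ultimately show ?thesis by (simp only: add_0_right)
qed

lemma inj_cutf: "inj_on (\<lambda>i. cutf i G) {..w G}"
  proof (rule inj_onI)
    fix i j assume h: "i \<in> {..w G}" "j \<in> {..w G}" "cutf i G = cutf j G"
    have a: "w (fst (cutf i G)) = i" using w_cutf[of i G] h(1) by simp
    have a2: "w (fst (cutf j G)) = j" using w_cutf[of j G] h(2) by simp
    show "i = j" using a a2 h(3) by metis
  qed
lemma sum_cuts: "(\<Sum>p\<in>cuts G. g p) = (\<Sum>i\<le>w G. g (cutf i G))"
  unfolding cuts_def using sum.reindex[OF inj_cutf[of G], of g] by (simp only: comp_def)

lemma pair_cons_sum:
  "pair (t # R) G = (\<Sum>i\<le>w G. pair R (fst (cutf i G)) * pair [t] (snd (cutf i G)) :: 'k::field)"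
proof (cases R)
  case Nil
  have "(\<Sum>i\<le>w G. pair [] (fst (cutf i G)) * pair [t] (snd (cutf i G)) :: 'k)
      = pair [] (fst (cutf 0 G)) * pair [t] (snd (cutf 0 G))"
  proof (rule sum_single)
    fix i assume "i \<in> {..w G}" "i \<noteq> 0"
    then have "w (fst (cutf i G)) = i" using w_cutf[of i G] by simp
    then have "fst (cutf i G) \<noteq> []" using \<open>i \<noteq> 0\<close> by auto
    then show "pair [] (fst (cutf i G)) * pair [t] (snd (cutf i G)) = (0::'k)" by simp
  qed simp_all
  then show ?thesis using Nil by (simp only: cutf_0 fst_conv snd_conv pair.simps(1) simp_thms(6) if_True mult_1)
next
  case (Cons s F)
  have "pair (t # s # F) G = (\<Sum>p\<in>supp (delta G :: _ \<Rightarrow> 'k). delta G p * pair (s # F) (fst p) * pair [t] (snd p) :: 'k)"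
    by simp
  also have "\<dots> = (\<Sum>p\<in>cuts G. pair (s # F) (fst p) * pair [t] (snd p))"
    by (simp add: supp_delta delta_eq)
  finally show ?thesis using Cons by (simp add: sum_cuts)
qed

lemma w_tree_pos: "w [t] \<ge> 1"
  by (cases t) auto

lemma w_cons: "w (t # R) = w [t] + w R"
  using w_append[of "[t]" R] by simp

lemma pair_w: "pair F G \<noteq> (0::'k::field) \<Longrightarrow> w F = w G"
proof (induction "w F" arbitrary: F G rule: less_induct)
  case less
  show ?case
  proof (cases F)
    case Nil
    then show ?thesis using less.prems by (auto split: if_splits)
  next
    case (Cons t R)
    show ?thesis
    proof (cases R)
      case Nil
      obtain X where t: "t = Node X" by (cases t)
      from less.prems obtain G' where G: "G = dot # G'" "pair X G' \<noteq> (0::'k)"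
        using Cons Nil t by (auto split: list.splits if_splits)
      have "w X < w F" using Cons Nil t by simp
      from less.hyps[OF this G(2)] show ?thesis using Cons Nil t G by simp
    next
      case (Cons s F')
      have "(\<Sum>i\<le>w G. pair R (fst (cutf i G)) * pair [t] (snd (cutf i G))) \<noteq> (0::'k)"
        using less.prems \<open>F = t # R\<close> pair_cons_sum[of t R G] by metis
      then obtain i where i: "i \<le> w G"
        "pair R (fst (cutf i G)) * pair [t] (snd (cutf i G)) \<noteq> (0::'k)"
        by (meson atMost_iff sum.not_neutral_contains_not_neutral)
      have e1: "w F = w [t] + w R" using \<open>F = t # R\<close> w_cons[of t R] by simp
      have e2: "w R = w [s] + w F'" using Cons w_cons[of s F'] by simp
      have lt: "w R < w F" "w [t] < w F" using e1 e2 w_tree_pos[of t] w_tree_pos[of s] by linarith+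
      have "pair R (fst (cutf i G)) \<noteq> (0::'k)" "pair [t] (snd (cutf i G)) \<noteq> (0::'k)" using i(2) by auto
      then have "w R = w (fst (cutf i G))" "w [t] = w (snd (cutf i G))"
        using less.hyps[OF lt(1)] less.hyps[OF lt(2)] by auto
      then have "w R = i" "w [t] = w G - i" using w_cutf[OF i(1)] by auto
      then show ?thesis using e1 i(1) by linarith
    qed
  qed
qed

lemma pair_Nil_right: "pair F [] = (if F = [] then 1 else (0::'k::field))"
  using pair_w[of F "[]"] by (cases "F = []") auto

lemma pair_M1:
  assumes "w (t # R) = w G"
  shows "pair (t # R) G = pair R (fst (cutf (w R) G)) * (pair [t] (snd (cutf (w R) G)) :: 'k::field)"
proof -
  have le: "w R \<le> w G" using assms w_cons[of t R] by simp
  show ?thesis unfolding pair_cons_sum[of t R G]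
  proof (rule sum_single)
    fix i assume "i \<in> {..w G}" "i \<noteq> w R"
    then have "pair R (fst (cutf i G)) = (0::'k)" using pair_w[of R "fst (cutf i G)"] w_cutf[of i G] by auto
    then show "pair R (fst (cutf i G)) * pair [t] (snd (cutf i G)) = (0::'k)" by simp
  qed (use le in auto)
qed

lemma cutf_app_le: "i \<le> w G1 \<Longrightarrow> cutf i (G1 @ G2) = (fst (cutf i G1), snd (cutf i G1) @ G2)"
  using cutf_append[of i G1 G2] by simp

lemma cutf_app_ge: "w G1 \<le> i \<Longrightarrow> cutf i (G1 @ G2) = (G1 @ fst (cutf (i - w G1) G2), snd (cutf (i - w G1) G2))"
proof (cases "i = w G1")
  case True
  then show ?thesis using cutf_append[of i G1 G2] cutf_w[of G1] by simp
next
  case False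
  assume "w G1 \<le> i"
  then show ?thesis using cutf_append[of i G1 G2] False by simp
qed

lemma pair_P:
  "w (F1 @ F2) = w G \<Longrightarrow>
   pair (F1 @ F2) G = pair F2 (fst (cutf (w F2) G)) * (pair F1 (snd (cutf (w F2) G)) :: 'k::field)"
proof (induction F1 arbitrary: G)
  case Nil
  then have "cutf (w F2) G = (G, [])" using cutf_w[of G] by simp
  then show ?case by simp
next
  case (Cons t F1')
  define m where "m = w (F1' @ F2)"
  define f where "f = w F2"
  define G' where "G' = fst (cutf m G)"
  define H where "H = snd (cutf f G)"
  have wG: "w G = w [t] + m" using Cons.prems w_cons[of t "F1' @ F2"] unfolding m_def by simp
  have fm1: "f \<le> m" unfolding f_def m_def by simp
  have fm2: "m \<le> w G" using wG by simp
  note fm = fm1 fm2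
  have wG': "w G' = m" unfolding G'_def using w_cutf[OF fm(2)] by simp
  have wH: "w H = w G - f" unfolding H_def using w_cutf[of f G] fm by simp
  have ca: "cutf f G' = (fst (cutf f G), fst (cutf (m - f) H))"
     and cb: "snd (cutf (m - f) H) = snd (cutf m G)"
    using cutf_coassoc[OF fm] unfolding G'_def H_def by simp_all
  have "pair ((t # F1') @ F2) G = pair (t # (F1' @ F2)) G" by simp
  also have "\<dots> = pair (F1' @ F2) G' * (pair [t] (snd (cutf m G)) :: 'k)"
    using pair_M1[of t "F1' @ F2" G] Cons.prems unfolding G'_def m_def by simp
  also have "pair (F1' @ F2) G' = pair F2 (fst (cutf f G')) * (pair F1' (snd (cutf f G')) :: 'k)"
    using Cons.IH[of G'] wG' unfolding m_def f_def by simp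
  also have "\<dots> = pair F2 (fst (cutf f G)) * (pair F1' (fst (cutf (m - f) H)) :: 'k)"
    using ca by simp
  finally have L: "pair ((t # F1') @ F2) G = pair F2 (fst (cutf f G)) * pair F1' (fst (cutf (m - f) H))
      * (pair [t] (snd (cutf (m - f) H)) :: 'k)" using cb by simp
  have wt: "w (t # F1') = w H" using wH wG w_cons[of t F1'] unfolding m_def f_def by simp
  have mf: "m - f = w F1'" unfolding m_def f_def by simp
  have "pair (t # F1') H = pair F1' (fst (cutf (m - f) H)) * (pair [t] (snd (cutf (m - f) H)) :: 'k)"
    using pair_M1[OF wt] mf by simp
  then show ?case using L unfolding H_def f_def by (simp add: mult.assoc)
qed

lemma pair_single_right:
  "pair F [Node Y] = (case F of [] \<Rightarrow> 0 | u # F' \<Rightarrow> if u = dot then pair F' Y else (0::'k::field))"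
proof (cases F)
  case Nil
  then show ?thesis by simp
next
  case (Cons t R)
  obtain X where t: "t = Node X" by (cases t)
  show ?thesis
  proof (cases "R = []")
    case True
    then show ?thesis using Cons t by (simp add: pair_Nil_right)
  next
    case False
    show ?thesis
    proof (cases "w F = w [Node Y]")
      case False
      then have "pair F [Node Y] = (0::'k)" using pair_w by blast
      moreover have "t = dot \<Longrightarrow> pair R Y = (0::'k)"
        using pair_w[of R Y] False Cons by force
      ultimately show ?thesis using Cons by simp
    next
      case True
      define r where "r = w R"
      have wF: "w F = Suc (w X) + r" using Cons t w_cons[of t R] unfolding r_def by simp
      have rY: "r \<le> w Y" using True wF by simp
      have c: "cutf r [Node Y] = (fst (cutf r Y), [Node (snd (cutf r Y))])" using rY by simp
      have "pair F [Node Y] = pair R (fst (cutf r [Node Y])) * (pair [t] (snd (cutf r [Node Y])) :: 'k)"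
        using pair_M1[of t R "[Node Y]"] True Cons unfolding r_def by simp
      also have "\<dots> = pair R (fst (cutf r Y)) * (pair [Node X] [Node (snd (cutf r Y))] :: 'k)"
        using c t by simp
      finally have e: "pair F [Node Y] = pair R (fst (cutf r Y)) *
          (if snd (cutf r Y) = [] then pair X [] else (0::'k))" by simp
      have ws: "w (snd (cutf r Y)) = w Y - r" using w_cutf[OF rY] by simp
      show ?thesis
      proof (cases "X = []")
        case True
        then have "r = w Y" using wF \<open>w F = w [Node Y]\<close> by simp
        then have "cutf r Y = (Y, [])" using cutf_w by simp
        then show ?thesis using e Cons t True by simp
      next
        case False
        then have "r < w Y" using wF \<open>w F = w [Node Y]\<close> by (cases X rule: w.cases) auto
        then have "snd (cutf r Y) \<noteq> []" using ws by auto
        then show ?thesis using e Cons t False by simp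
      qed
    qed
  qed
qed


lemma w_cons_lt:
  assumes "R \<noteq> []"
  shows "w R < w (t # R)" "w [t] < w (t # R)"
proof -
  obtain s R' where "R = s # R'" using assms by (cases R) auto
  then have "w R \<ge> 1" using w_cons[of s R'] w_tree_pos[of s] by simp
  then show "w R < w (t # R)" "w [t] < w (t # R)" using w_cons[of t R] w_tree_pos[of t] by simp_all
qed

lemma pair_iii:
  "w F = w G1 + w G2 \<Longrightarrow>
   pair F (G1 @ G2) = pair (fst (cutf (w G2) F)) G2 * (pair (snd (cutf (w G2) F)) G1 :: 'k::field)"
proof (induction "w F" arbitrary: F G1 G2 rule: less_induct)
  case less
  show ?case
  proof (cases F)
    case Nil
    then show ?thesis using less.prems by simp
  next
    case (Cons t R)
    show ?thesis
    proof (cases "R = []")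
      case True
      obtain X where t: "t = Node X" by (cases t)
      define k where "k = w G2"
      show ?thesis
      proof (cases G1)
        case Nil
        then have "cutf (w G2) F = (F, [])" using less.prems cutf_w[of F] by simp
        then show ?thesis using Nil by simp
      next
        case (Cons u G1')
        have wF: "w F = Suc (w X)" using \<open>F = t # R\<close> True t by simp
        have "w G1 \<ge> 1" using Cons w_cons[of u G1'] w_tree_pos[of u] by simp
        then have kX: "k \<le> w X" using less.prems wF unfolding k_def by simp
        have c: "cutf k F = (fst (cutf k X), [Node (snd (cutf k X))])"
          using kX \<open>F = t # R\<close> True t by simp
        show ?thesis
        proof (cases "u = dot")
          case True
          have "w X = w G1' + w G2" using less.prems wF Cons True by simp
          moreover have "w X < w F" using wF by simp
          ultimately have "pair X (G1' @ G2) = pair (fst (cutf k X)) G2 * (pair (snd (cutf k X)) G1' :: 'k)"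
            using less.hyps unfolding k_def by blast
          then show ?thesis using c Cons True \<open>F = t # R\<close> \<open>R = []\<close> t unfolding k_def by simp
        next
          case False
          then show ?thesis using c Cons \<open>F = t # R\<close> \<open>R = []\<close> t unfolding k_def by simp
        qed
      qed
    next
      case False
      note Rne = False
      define k where "k = w G2"
      define r where "r = w R"
      define G where "G = G1 @ G2"
      have wF: "w F = w [t] + r" using \<open>F = t # R\<close> w_cons[of t R] unfolding r_def by simp
      have lt: "w R < w F" "w [t] < w F" using w_cons_lt[OF Rne] \<open>F = t # R\<close> by simp_all
      have L0: "pair F G = pair R (fst (cutf r G)) * (pair [t] (snd (cutf r G)) :: 'k)"
        using pair_M1[of t R G] less.prems \<open>F = t # R\<close> unfolding G_def r_def by simp
      show ?thesis
      proof (cases "w [t] \<le> k")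
        case True
        define j where "j = k - w [t]"
        define L2 where "L2 = fst (cutf j G2)"
        have jr: "j \<le> r" using True less.prems wF unfolding j_def k_def by simp
        have jk: "j \<le> w G2" unfolding j_def k_def by simp
        have wL2: "w L2 = j" unfolding L2_def using w_cutf[OF jk] by simp
        have cF: "cutf k F = (t # fst (cutf j R), snd (cutf j R))"
          using cutf_app_ge[of "[t]" k R] True \<open>F = t # R\<close> unfolding j_def by simp
        have wLR: "w (fst (cutf j R)) = j" using w_cutf[of j R] jr unfolding r_def by simp
        have wtL: "w (t # fst (cutf j R)) = w G2"
          using w_cons[of t "fst (cutf j R)"] wLR True unfolding j_def k_def by simp
        have R1: "pair (t # fst (cutf j R)) G2 = pair (fst (cutf j R)) L2 * (pair [t] (snd (cutf j G2)) :: 'k)"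
          using pair_M1[OF wtL] wLR unfolding L2_def by simp
        have G1r: "w G1 \<le> r" using less.prems wF True unfolding k_def by simp
        have rj: "r - w G1 = j" using less.prems wF True unfolding k_def j_def by simp
        have cG: "cutf r G = (G1 @ L2, snd (cutf j G2))"
          using cutf_app_ge[OF G1r, of G2] rj unfolding G_def L2_def by simp
        have wR: "w R = w G1 + w L2" using less.prems wF wL2 True unfolding r_def j_def k_def by simp
        have IH: "pair R (G1 @ L2) = pair (fst (cutf (w L2) R)) L2 * (pair (snd (cutf (w L2) R)) G1 :: 'k)"
          using less.hyps[OF lt(1) wR] .
        show ?thesis using L0 cG IH R1 cF wL2 unfolding G_def k_def[symmetric]
          by (simp add: mult.commute mult.left_commute)
      next
        case False
        have ct: "cutf k F = (fst (cutf k [t]), snd (cutf k [t]) @ R)"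
          using cutf_app_le[of k "[t]" R] False \<open>F = t # R\<close> by simp
        have wS: "w (snd (cutf k [t]) @ R) = w G1"
          using w_cutf[of k "[t]"] False less.prems wF unfolding k_def r_def by simp
        have P: "pair (snd (cutf k [t]) @ R) G1 = pair R (fst (cutf r G1)) * (pair (snd (cutf k [t])) (snd (cutf r G1)) :: 'k)"
          using pair_P[OF wS] unfolding r_def by simp
        have rG1: "r \<le> w G1" using False less.prems wF unfolding k_def by simp
        have cG: "cutf r G = (fst (cutf r G1), snd (cutf r G1) @ G2)"
          using cutf_app_le[OF rG1] unfolding G_def by simp
        have wt: "w [t] = w (snd (cutf r G1)) + w G2"
          using w_cutf[OF rG1] less.prems wF rG1 by simp
        have IH: "pair [t] (snd (cutf r G1) @ G2) = pair (fst (cutf k [t])) G2 * (pair (snd (cutf k [t])) (snd (cutf r G1)) :: 'k)"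
          using less.hyps[OF lt(2) wt] unfolding k_def by simp
        show ?thesis using L0 cG IH P ct unfolding G_def k_def[symmetric]
          by (simp add: mult.commute mult.left_commute)
      qed
    qed
  qed
qed

lemma pair_sym: "pair F G = (pair G F :: 'k::field)"
proof (induction "w F" arbitrary: F G rule: less_induct)
  case less
  show ?case
  proof (cases F)
    case Nil
    then show ?thesis by (simp add: pair_Nil_right)
  next
    case (Cons t R)
    show ?thesis
    proof (cases "R = []")
      case True
      obtain X where t: "t = Node X" by (cases t)
      have lt: "w X < w F" using Cons True t by simp
      show ?thesis
      proof (cases G)
        case Nil
        then show ?thesis using Cons True t by (simp add: pair_Nil_right)
      next
        case (Cons u G')
        have "pair X G' = (pair G' X :: 'k)" using less.hyps[OF lt] by blast
        then show ?thesis using Cons \<open>F = t # R\<close> True t by (simp add: pair_single_right)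
      qed
    next
      case False
      have lt: "w R < w F" "w [t] < w F" using w_cons_lt[OF False] Cons by simp_all
      show ?thesis
      proof (cases "w F = w G")
        case False
        then have "pair F G = (0::'k)" "pair G F = (0::'k)" using pair_w[of F G] pair_w[of G F] by auto
        then show ?thesis by simp
      next
        case True
        have wG: "w G = w [t] + w R" using True Cons w_cons[of t R] by simp
        have "pair F G = pair R (fst (cutf (w R) G)) * (pair [t] (snd (cutf (w R) G)) :: 'k)"
          using pair_M1[of t R G] True Cons by simp
        also have "\<dots> = pair (fst (cutf (w R) G)) R * (pair (snd (cutf (w R) G)) [t] :: 'k)"
          using less.hyps[OF lt(1)] less.hyps[OF lt(2)] by metis
        also have "\<dots> = pair G ([t] @ R)"
          using pair_iii[OF wG] by (rule sym)
        finally show ?thesis using Cons by simp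
      qed
    qed
  qed
qed

fun sg :: "forest \<Rightarrow> forest" where
  "sg [] = []"
| "sg (Node X # R) = Node (sg R) # sg X"

fun gt :: "forest \<Rightarrow> forest \<Rightarrow> bool" where
  "gt (Node X' # R') (Node X # R) = (w X < w X' \<or> (w X' = w X \<and> (gt X' X \<or> (X' = X \<and> gt R' R))))"
| "gt _ _ = False"

lemma w_sg[simp]: "w (sg F) = w F"
  by (induction F rule: sg.induct) auto

lemma sg_sg[simp]: "sg (sg F) = F"
  by (induction F rule: sg.induct) auto

lemma gt_irrefl: "\<not> gt F F"
  by (induction F rule: w.induct) auto

lemma gt_trans: "gt a b \<Longrightarrow> gt b c \<Longrightarrow> gt a c"
proof (induction a b arbitrary: c rule: gt.induct)
  case (1 X' R' X R)
  then obtain X'' R'' where c: "c = Node X'' # R''" by (cases c rule: w.cases) auto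
  show ?case using 1 c by auto
qed auto

lemma gt_total: "w a = w b \<Longrightarrow> a \<noteq> b \<Longrightarrow> gt a b \<or> gt b a"
proof (induction a arbitrary: b rule: w.induct)
  case 1
  then show ?case by simp
next
  case (2 X' R')
  then obtain X R where b: "b = Node X # R" by (cases b rule: w.cases) auto
  show ?case
  proof (cases "w X = w X'")
    case True
    show ?thesis
    proof (cases "X = X'")
      case True
      then show ?thesis using 2 b by auto
    next
      case False
      then show ?thesis using 2(1)[of X] b \<open>w X = w X'\<close> by auto
    qed
  next
    case False
    then show ?thesis using b by auto
  qed
qed

lemma cutf_node_wA: "cutf (w A) (Node A # C) = (A, dot # C)"
  using cutf_w[of A] by simp

lemma cutf_node_lt: "i < w A \<Longrightarrow> snd (cutf i (Node A # C)) = Node (snd (cutf i A)) # C \<and> snd (cutf i A) \<noteq> []"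
  using w_cutf[of i A] by auto

lemma tri:
  "w F' = w F \<Longrightarrow> gt F' F \<or> F' = F \<Longrightarrow> pair F' (sg F) = (if F' = F then 1 else (0::'k::field))"
proof (induction "w F" arbitrary: F F' rule: less_induct)
  case less
  show ?case
  proof (cases F)
    case Nil
    then have "F' = []" using less.prems by simp
    then show ?thesis using Nil by simp
  next
    case (Cons t R)
    obtain X where t: "t = Node X" by (cases t)
    obtain X' R' where F': "F' = Node X' # R'"
      using less.prems Cons t by (cases F' rule: w.cases) auto
    have sgF: "sg F = Node (sg R) # sg X" using Cons t by simp
    have wF': "w (Node X' # R') = w (sg F)" using less.prems F' by simp
    have M: "pair F' (sg F) = pair R' (fst (cutf (w R') (sg F))) * (pair [Node X'] (snd (cutf (w R') (sg F))) :: 'k)"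
      using pair_M1[OF wF'] F' by simp
    have wsum: "w X' + w R' = w X + w R" using less.prems F' Cons t by simp
    have ltX: "w X < w F" and ltR: "w R < w F" using Cons t by simp_all
    have hyp: "w X < w X' \<or> (w X' = w X \<and> (gt X' X \<or> (X' = X \<and> (gt R' R \<or> R' = R))))"
      using less.prems(2) F' Cons t by auto
    show ?thesis
    proof (cases "w X' = w X")
      case True
      then have wR: "w R' = w (sg R)" using wsum by simp
      have "cutf (w R') (sg F) = cutf (w (sg R)) (Node (sg R) # sg X)" by (simp only: sgF wR)
      also have "\<dots> = (sg R, dot # sg X)" by (rule cutf_node_wA)
      finally have c: "cutf (w R') (sg F) = (sg R, dot # sg X)" .
      have M2: "pair F' (sg F) = pair R' (sg R) * (pair X' (sg X) :: 'k)"
        using M c by simp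
      show ?thesis
      proof (cases "X' = X")
        case True
        have "gt R' R \<or> R' = R" using hyp True gt_irrefl by auto
        then have "pair R' (sg R) = (if R' = R then 1 else (0::'k))"
          using less.hyps[OF ltR] wR by simp
        moreover have "pair X' (sg X) = (1::'k)" using less.hyps[OF ltX] True by simp
        ultimately show ?thesis using M2 True F' Cons t by simp
      next
        case False
        then have "gt X' X" using hyp True by auto
        then have "pair X' (sg X) = (0::'k)" using less.hyps[OF ltX] True False by simp
        then show ?thesis using M2 False F' Cons t by simp
      qed
    next
      case False
      then have lt: "w R' < w (sg R)" using hyp wsum by simp
      have "snd (cutf (w R') (sg F)) = Node (snd (cutf (w R') (sg R))) # sg X"
        "snd (cutf (w R') (sg R)) \<noteq> []"
        using cutf_node_lt[OF lt, of "sg X"] sgF by simp_all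
      then have "pair [Node X'] (snd (cutf (w R') (sg F))) = (0::'k)" by simp
      moreover have "F' \<noteq> F" using False F' Cons t by auto
      ultimately show ?thesis using M by simp
    qed
  qed
qed

lemma finite_w_le: "finite {F. w F \<le> n}"
proof (induction n)
  case 0
  then show ?case by simp
next
  case (Suc n)
  have "{F. w F \<le> Suc n} \<subseteq> insert [] ((\<lambda>(X, R). Node X # R) ` ({F. w F \<le> n} \<times> {F. w F \<le> n}))"
  proof
    fix F assume "F \<in> {F. w F \<le> Suc n}"
    then show "F \<in> insert [] ((\<lambda>(X, R). Node X # R) ` ({F. w F \<le> n} \<times> {F. w F \<le> n}))"
      by (cases F rule: w.cases) force+
  qed
  moreover have "finite (insert [] ((\<lambda>(X, R). Node X # R) ` ({F. w F \<le> n} \<times> {F. w F \<le> n})))"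
    using Suc by simp
  ultimately show ?case by (rule finite_subset)
qed

lemma finite_w_eq: "finite {F. w F = n}"
  by (rule finite_subset[OF _ finite_w_le[of n]]) auto

lemma pairing_sum:
  assumes "finite S" "supp x \<subseteq> S"
  shows "pairing x G = (\<Sum>F\<in>S. x F * pair F G)"
  unfolding pairing_def
  by (rule sum.mono_neutral_left) (use assms in \<open>auto simp: supp_def\<close>)

lemma exists_min:
  assumes "finite Q" "Q \<noteq> {}"
  shows "\<exists>F\<in>Q. \<forall>F'\<in>Q. \<not> gt F F'"
  using assms
proof (induction Q rule: finite_ne_induct)
  case (singleton x)
  then show ?case using gt_irrefl by auto
next
  case (insert x Q)
  then obtain m where m: "m \<in> Q" "\<forall>F'\<in>Q. \<not> gt m F'" by blast
  show ?case
  proof (cases "gt m x")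
    case True
    have "\<forall>F'\<in>insert x Q. \<not> gt x F'"
      using m True gt_trans gt_irrefl by blast
    then show ?thesis by blast
  next
    case False
    then show ?thesis using m by blast
  qed
qed

lemma inj_pairing:
  assumes "inH (y :: forest \<Rightarrow> 'k::field)" "\<And>H. pairing y H = 0"
  shows "y = (\<lambda>_. 0)"
proof (rule ccontr)
  assume "y \<noteq> (\<lambda>_. 0)"
  then obtain F0 where F0: "F0 \<in> supp y" by (auto simp: supp_def)
  define Q where "Q = {F \<in> supp y. w F = w F0}"
  have "finite Q" "Q \<noteq> {}" using assms(1) F0 unfolding Q_def inH_def by auto
  then obtain F where F: "F \<in> Q" "\<forall>F'\<in>Q. \<not> gt F F'" using exists_min by blast
  have fin: "finite (supp y)" using assms(1) by (simp add: inH_def)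
  have FS: "F \<in> supp y" using F Q_def by simp
  have "pairing y (sg F) = (\<Sum>G\<in>supp y. y G * pair G (sg F))" by (simp add: pairing_def)
  also have "\<dots> = y F * pair F (sg F)"
  proof (rule sum_single[OF fin FS])
    fix G assume G: "G \<in> supp y" "G \<noteq> F"
    show "y G * pair G (sg F) = 0"
    proof (cases "w G = w F")
      case True
      then have "G \<in> Q" using G F Q_def by simp
      then have "\<not> gt F G" using F by blast
      then have "gt G F" using gt_total[OF True G(2)] by blast
      then have "pair G (sg F) = (0::'k)" using tri[OF True] G(2) by simp
      then show ?thesis by simp
    next
      case False
      then have "pair G (sg F) = (0::'k)" using pair_w[of G "sg F"] by auto
      then show ?thesis by simp
    qed
  qed
  also have "\<dots> = y F"
  proof -
    have "pair F (sg F) = (1::'k)" using tri[of F F] by simp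
    then show ?thesis by simp
  qed
  finally have "y F = 0" using assms(2) by simp
  then show False using FS by (simp add: supp_def)
qed

lemma exists_dual:
  "\<exists>y :: forest \<Rightarrow> 'k::field. inH y \<and> (\<forall>H. pairing y H = (if H = sg F then 1 else 0))"
proof (induction "card {F'. w F' = w F \<and> gt F' F}" arbitrary: F rule: less_induct)
  case less
  define S where "S = {F'. w F' = w F \<and> gt F' F}"
  have finS: "finite S" unfolding S_def by (rule finite_subset[OF _ finite_w_eq[of "w F"]]) auto
  have "\<forall>F'\<in>S. \<exists>y :: forest \<Rightarrow> 'k. inH y \<and> (\<forall>H. pairing y H = (if H = sg F' then 1 else 0))"
  proof
    fix F' assume F': "F' \<in> S"
    have sub: "{F''. w F'' = w F' \<and> gt F'' F'} \<subset> S"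
    proof
      show "{F''. w F'' = w F' \<and> gt F'' F'} \<subseteq> S"
      proof
        fix x assume "x \<in> {F''. w F'' = w F' \<and> gt F'' F'}"
        then have "w x = w F'" "gt x F'" by auto
        moreover have "w F' = w F" "gt F' F" using F' unfolding S_def by auto
        ultimately show "x \<in> S" unfolding S_def using gt_trans[of x F' F] by simp
      qed
      show "{F''. w F'' = w F' \<and> gt F'' F'} \<noteq> S"
        using F' gt_irrefl by auto
    qed
    have "card {F''. w F'' = w F' \<and> gt F'' F'} < card {F'. w F' = w F \<and> gt F' F}"
      using psubset_card_mono[OF finS sub] unfolding S_def by simp
    then show "\<exists>y :: forest \<Rightarrow> 'k. inH y \<and> (\<forall>H. pairing y H = (if H = sg F' then 1 else 0))"
      by (rule less.hyps)
  qed
  then obtain Y where Y: "\<And>F'. F' \<in> S \<Longrightarrow> inH (Y F' :: forest \<Rightarrow> 'k) \<and> (\<forall>H. pairing (Y F') H = (if H = sg F' then 1 else 0))"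
    by metis
  define y where "y = (\<lambda>a. basisv F a - (\<Sum>F'\<in>S. pair F (sg F') * Y F' a) :: 'k)"
  define U where "U = insert F (\<Union>F'\<in>S. supp (Y F'))"
  have finU: "finite U" unfolding U_def using finS Y by (auto simp: inH_def)
  have suppU: "supp y \<subseteq> U"
  proof
    fix a assume a: "a \<in> supp y"
    show "a \<in> U"
    proof (rule ccontr)
      assume "a \<notin> U"
      then have "basisv F a = (0::'k)" "\<forall>F'\<in>S. Y F' a = 0"
        unfolding U_def by (auto simp: basisv_def supp_def)
      then have "y a = 0" unfolding y_def by simp
      then show False using a by (simp add: supp_def)
    qed
  qed
  have "inH y" using finU suppU finite_subset by (auto simp: inH_def)
  moreover have "\<forall>H. pairing y H = (if H = sg F then 1 else 0)"
  proof
    fix H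
    have sY: "\<And>F'. F' \<in> S \<Longrightarrow> supp (Y F') \<subseteq> U" unfolding U_def by auto
    have "pairing y H = (\<Sum>a\<in>U. y a * pair a H)" by (rule pairing_sum[OF finU suppU])
    also have "\<dots> = (\<Sum>a\<in>U. basisv F a * pair a H) - (\<Sum>a\<in>U. \<Sum>F'\<in>S. pair F (sg F') * Y F' a * pair a H)"
      unfolding y_def by (simp add: left_diff_distrib sum_subtractf sum_distrib_right)
    also have "(\<Sum>a\<in>U. basisv F a * pair a H) = (\<Sum>a\<in>U. if a = F then pair a H else (0::'k))"
      by (rule sum.cong) (auto simp: basisv_def)
    also have "\<dots> = pair F H"
      using finU by (simp add: U_def)
    also have "(\<Sum>a\<in>U. \<Sum>F'\<in>S. pair F (sg F') * Y F' a * pair a H)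
        = (\<Sum>F'\<in>S. pair F (sg F') * (\<Sum>a\<in>U. Y F' a * pair a H) :: 'k)"
      by (subst sum.swap) (simp add: sum_distrib_left mult.assoc)
    also have "\<dots> = (\<Sum>F'\<in>S. pair F (sg F') * pairing (Y F') H)"
      using pairing_sum[OF finU sY] by simp
    also have "\<dots> = (\<Sum>F'\<in>S. if F' = sg H then pair F (sg F') else 0)"
      using Y by (intro sum.cong) auto
    also have "\<dots> = (if sg H \<in> S then pair F H else 0)"
      using finS by simp
    finally have e: "pairing y H = pair F H - (if sg H \<in> S then pair F H else 0)" .
    show "pairing y H = (if H = sg F then 1 else 0)"
    proof (cases "sg H \<in> S")
      case True
      then have "H \<noteq> sg F" unfolding S_def using gt_irrefl by auto
      then show ?thesis using e True by simp
    next
      case False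
      show ?thesis
      proof (cases "H = sg F")
        case True
        have "pair F (sg F) = (1::'k)" using tri[of F F] by simp
        then show ?thesis using e False True by simp
      next
        case HF: False
        define K where "K = sg H"
        have KF: "K \<noteq> F" using HF unfolding K_def by auto
        have HK: "H = sg K" unfolding K_def by simp
        have "pair F H = (0::'k)"
        proof (cases "w K = w F")
          case True
          then have "\<not> gt K F" using False unfolding S_def K_def by simp
          then have "gt F K" using gt_total[OF True KF] by blast
          then show ?thesis using tri[of F K] True KF HK by simp
        next
          case False
          then show ?thesis using pair_w[of F H] HK by auto
        qed
        then show ?thesis using e False HF by simp
      qed
    qed
  qed
  ultimately have "inH y \<and> (\<forall>H. pairing y H = (if H = sg F then 1 else 0))" by (rule conjI)
  then show ?case by (intro exI[where x=y])
qed

lemma pairing_diff: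
  assumes "inH x1" "inH x2"
  shows "pairing (\<lambda>a. x1 a - x2 a) H = pairing x1 H - (pairing x2 H :: 'k::field)"
proof -
  define S where "S = supp x1 \<union> supp x2"
  have fin: "finite S" using assms by (simp add: S_def inH_def)
  have s: "supp (\<lambda>a. x1 a - x2 a) \<subseteq> S" "supp x1 \<subseteq> S" "supp x2 \<subseteq> S"
    unfolding S_def supp_def by auto
  show ?thesis
    unfolding pairing_sum[OF fin s(1)] pairing_sum[OF fin s(2)] pairing_sum[OF fin s(3)]
    by (simp add: left_diff_distrib sum_subtractf)
qed

lemma fdual_prop:
  "inH (fdual G :: forest \<Rightarrow> 'k::field) \<and> (\<forall>H. pairing (fdual G :: forest \<Rightarrow> 'k) H = (if G = H then 1 else 0))"
proof -
  let ?P = "\<lambda>x :: forest \<Rightarrow> 'k. inH x \<and> (\<forall>H. pairing x H = (if G = H then 1 else 0))"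
  have ex: "\<exists>x. ?P x"
  proof -
    obtain y :: "forest \<Rightarrow> 'k" where y: "inH y" "\<forall>H. pairing y H = (if H = sg (sg G) then 1 else 0)"
      using exists_dual[of "sg G"] by blast
    have "\<forall>H. pairing y H = (if G = H then 1 else 0)"
    proof
      fix H
      show "pairing y H = (if G = H then 1 else 0)" using y(2) by (cases "G = H") auto
    qed
    then have "?P y" using y(1) by simp
    then show ?thesis by (intro exI[where x=y])
  qed
  have un: "x1 = x2" if h1: "?P x1" and h2: "?P x2" for x1 x2
  proof -
    have "supp (\<lambda>a. x1 a - x2 a) \<subseteq> supp x1 \<union> supp x2" unfolding supp_def by auto
    moreover have "finite (supp x1 \<union> supp x2)" using h1 h2 by (simp add: inH_def)
    ultimately have "inH (\<lambda>a. x1 a - x2 a)" unfolding inH_def by (rule finite_subset)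
    moreover have "pairing (\<lambda>a. x1 a - x2 a) H = 0" for H
    proof -
      have "pairing (\<lambda>a. x1 a - x2 a) H = pairing x1 H - pairing x2 H"
        by (rule pairing_diff) (use h1 h2 in auto)
      then show ?thesis using h1 h2 by simp
    qed
    ultimately have eq: "(\<lambda>a. x1 a - x2 a) = (\<lambda>_. 0)" by (rule inj_pairing)
    show ?thesis
    proof (rule ext)
      fix a
      have "x1 a - x2 a = 0" using fun_cong[OF eq, of a] by simp
      then show "x1 a = x2 a" by simp
    qed
  qed
  have "\<exists>!x. ?P x" by (rule ex_ex1I[OF ex]) (rule un)
  then have "?P (THE x. ?P x)" by (rule theI')
  then show ?thesis unfolding fdual_def .
qed

lemma cutsum: "(\<Sum>p\<in>cuts F. pair A (fst p) * pair B (snd p)) = (pair (B @ A) F :: 'k::field)"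
proof (cases "w (B @ A) = w F")
  case True
  have le: "w A \<le> w F" using True by simp
  have "(\<Sum>p\<in>cuts F. pair A (fst p) * pair B (snd p))
      = (\<Sum>i\<le>w F. pair A (fst (cutf i F)) * (pair B (snd (cutf i F)) :: 'k))"
    by (rule sum_cuts)
  also have "\<dots> = pair A (fst (cutf (w A) F)) * pair B (snd (cutf (w A) F))"
  proof (rule sum_single)
    fix i assume i: "i \<in> {..w F}" "i \<noteq> w A"
    then have "w (fst (cutf i F)) = i" using w_cutf[of i F] by simp
    then have "pair A (fst (cutf i F)) = (0::'k)" using pair_w[of A "fst (cutf i F)"] i(2) by auto
    then show "pair A (fst (cutf i F)) * pair B (snd (cutf i F)) = (0::'k)" by simp
  qed (use le in auto)
  also have "\<dots> = pair (B @ A) F" by (rule sym[OF pair_P[OF True]])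
  finally show ?thesis .
next
  case False
  have "(\<Sum>p\<in>cuts F. pair A (fst p) * pair B (snd p)) = (0::'k)"
  proof (rule sum.neutral, rule ballI)
    fix p assume p: "p \<in> cuts F"
    show "pair A (fst p) * pair B (snd p) = (0::'k)"
    proof (rule ccontr)
      assume "pair A (fst p) * pair B (snd p) \<noteq> (0::'k)"
      then have "pair A (fst p) \<noteq> (0::'k)" "pair B (snd p) \<noteq> (0::'k)" by auto
      then have "w A = w (fst p)" "w B = w (snd p)" using pair_w by blast+
      then show False using cuts_w[OF p] False by simp
    qed
  qed
  moreover have "pair (B @ A) F = (0::'k)" using pair_w False by blast
  ultimately show ?thesis by simp
qed

definition C0 :: "(forest \<Rightarrow> 'k::zero) \<Rightarrow> (forest \<times> forest) set" where
  "C0 x = (\<Union>F\<in>supp x. cuts F)"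

lemma finite_C0: "inH x \<Longrightarrow> finite (C0 x)"
  unfolding C0_def inH_def by simp

lemma supp_Delta: "supp (Delta (x :: forest \<Rightarrow> 'k::field)) \<subseteq> C0 x"
proof
  fix p assume p: "p \<in> supp (Delta x)"
  show "p \<in> C0 x"
  proof (rule ccontr)
    assume "p \<notin> C0 x"
    then have "\<forall>F\<in>supp x. delta F p = (0::'k)" unfolding C0_def by (auto simp: delta_eq)
    then have "Delta x p = 0" unfolding Delta_def by simp
    then show False using p by (simp add: supp_def)
  qed
qed

lemma PP:
  assumes "inH (x :: forest \<Rightarrow> 'k::field)" "finite C" "C0 x \<subseteq> C"
  shows "(\<Sum>p\<in>C. Delta x p * (pair A (fst p) * pair B (snd p)))
       = (\<Sum>F\<in>supp x. x F * pair (B @ A) F)"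
proof -
  have fin: "finite (supp x)" using assms(1) by (simp add: inH_def)
  have "(\<Sum>p\<in>C. Delta x p * (pair A (fst p) * pair B (snd p)))
      = (\<Sum>p\<in>C. \<Sum>F\<in>supp x. x F * (delta F p * (pair A (fst p) * pair B (snd p))))"
    unfolding Delta_def by (simp add: sum_distrib_right mult.assoc)
  also have "\<dots> = (\<Sum>F\<in>supp x. x F * (\<Sum>p\<in>C. delta F p * (pair A (fst p) * pair B (snd p))))"
    by (subst sum.swap) (simp add: sum_distrib_left)
  also have "\<dots> = (\<Sum>F\<in>supp x. x F * pair (B @ A) F)"
  proof (rule sum.cong[OF refl])
    fix F assume F: "F \<in> supp x"
    have sub: "cuts F \<subseteq> C" using F assms(3) unfolding C0_def by auto
    have "(\<Sum>p\<in>C. delta F p * (pair A (fst p) * pair B (snd p)))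
        = (\<Sum>p\<in>C. if p \<in> cuts F then pair A (fst p) * pair B (snd p) else (0::'k))"
      by (rule sum.cong) (auto simp: delta_eq)
    also have "\<dots> = sum (\<lambda>p. pair A (fst p) * pair B (snd p)) (C \<inter> cuts F)"
      by (rule sym[OF sum.inter_restrict[OF assms(2)]])
    also have "\<dots> = (\<Sum>p\<in>cuts F. pair A (fst p) * pair B (snd p))"
      using sub by (simp only: Int_absorb1)
    also have "\<dots> = pair (B @ A) F" by (rule cutsum)
    finally show "x F * (\<Sum>p\<in>C. delta F p * (pair A (fst p) * pair B (snd p))) = x F * pair (B @ A) F"
      by simp
  qed
  finally show ?thesis .
qed

lemma inj2:
  assumes fin: "finite (supp z)"
    and h: "\<And>A B. (\<Sum>p\<in>supp z. z p * (pair A (fst p) * pair B (snd p))) = (0::'k::field)"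
  shows "z = (\<lambda>_. 0)"
proof -
  define P1 where "P1 = fst ` supp z"
  define P2 where "P2 = snd ` supp z"
  have f1: "finite P1" "finite P2" unfolding P1_def P2_def using fin by simp_all
  have sub: "supp z \<subseteq> P1 \<times> P2" unfolding P1_def P2_def by force
  have out: "z p = 0" if "p \<notin> supp z" for p using that by (simp add: supp_def)
  have step1: "(\<Sum>b\<in>P2. z (a, b) * pair B b) = 0" for B a :: forest
  proof -
    define u where "u = (\<lambda>a. \<Sum>b\<in>P2. z (a, b) * pair B b)"
    have su: "supp u \<subseteq> P1"
    proof
      fix a assume a: "a \<in> supp u"
      show "a \<in> P1"
      proof (rule ccontr)
        assume "a \<notin> P1"
        then have "\<forall>b\<in>P2. z (a, b) = 0" using sub out by blast
        then have "u a = 0" unfolding u_def by simp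
        then show False using a by (simp add: supp_def)
      qed
    qed
    have iu: "inH u" unfolding inH_def using su f1 finite_subset by blast
    have "pairing u A = 0" for A
    proof -
      have "pairing u A = (\<Sum>a\<in>P1. u a * pair a A)" by (rule pairing_sum[OF f1(1) su])
      also have "\<dots> = (\<Sum>a\<in>P1. \<Sum>b\<in>P2. z (a, b) * (pair A a * pair B b))"
        unfolding u_def by (simp add: sum_distrib_right sum_distrib_left pair_sym[of _ A] mult.commute mult.left_commute)
      also have "\<dots> = (\<Sum>p\<in>P1 \<times> P2. z p * (pair A (fst p) * pair B (snd p)))"
        by (simp add: sum.cartesian_product split_beta)
      also have "\<dots> = (\<Sum>p\<in>supp z. z p * (pair A (fst p) * pair B (snd p)))"
        by (rule sym, rule sum.mono_neutral_left) (use f1 sub out in auto)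
      also have "\<dots> = 0" by (rule h)
      finally show ?thesis .
    qed
    then have "u = (\<lambda>_. 0)" by (rule inj_pairing[OF iu])
    then show ?thesis unfolding u_def by (metis)
  qed
  show ?thesis
  proof (rule ext)
    fix p :: "forest \<times> forest"
    obtain a b where p: "p = (a, b)" by fastforce
    define v where "v = (\<lambda>b. z (a, b))"
    have sv: "supp v \<subseteq> P2"
    proof
      fix b assume b: "b \<in> supp v"
      then have "(a, b) \<in> supp z" unfolding v_def supp_def by simp
      then show "b \<in> P2" unfolding P2_def by force
    qed
    have iv: "inH v" unfolding inH_def using sv f1 finite_subset by blast
    have "pairing v B = 0" for B
    proof -
      have "pairing v B = (\<Sum>b\<in>P2. v b * pair b B)" by (rule pairing_sum[OF f1(2) sv])
      also have "\<dots> = (\<Sum>b\<in>P2. z (a, b) * pair B b)" unfolding v_def by (simp add: pair_sym[of _ B])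
      also have "\<dots> = 0" by (rule step1)
      finally show ?thesis .
    qed
    then have "v = (\<lambda>_. 0)" by (rule inj_pairing[OF iv])
    then show "z p = 0" unfolding p v_def by metis
  qed
qed

lemma inH_lincomb:
  assumes "finite T" "\<And>t. t \<in> T \<Longrightarrow> inH (v t)"
  shows "supp (lincomb c v T) \<subseteq> (\<Union>t\<in>T. supp (v t))" "inH (lincomb c v T)"
proof -
  show s: "supp (lincomb c v T) \<subseteq> (\<Union>t\<in>T. supp (v t))"
  proof
    fix a assume a: "a \<in> supp (lincomb c v T)"
    show "a \<in> (\<Union>t\<in>T. supp (v t))"
    proof (rule ccontr)
      assume "a \<notin> (\<Union>t\<in>T. supp (v t))"
      then have "\<forall>t\<in>T. v t a = 0" by (auto simp: supp_def)
      then have "lincomb c v T a = 0" unfolding lincomb_def by simp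
      then show False using a by (simp add: supp_def)
    qed
  qed
  have "finite (\<Union>t\<in>T. supp (v t))" using assms by (auto simp: inH_def)
  then show "inH (lincomb c v T)" unfolding inH_def using s finite_subset by blast
qed

lemma pairing_lincomb:
  assumes "finite T" "\<And>t. t \<in> T \<Longrightarrow> inH (v t)"
  shows "pairing (lincomb c v T) H = (\<Sum>t\<in>T. c t * pairing (v t) H :: 'k::field)"
proof -
  define S where "S = (\<Union>t\<in>T. supp (v t))"
  have fS: "finite S" unfolding S_def using assms by (auto simp: inH_def)
  have sS: "supp (lincomb c v T) \<subseteq> S" unfolding S_def by (rule inH_lincomb[OF assms])
  have st: "supp (v t) \<subseteq> S" if "t \<in> T" for t unfolding S_def using that by auto
  have "pairing (lincomb c v T) H = (\<Sum>a\<in>S. lincomb c v T a * pair a H)" by (rule pairing_sum[OF fS sS])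
  also have "\<dots> = (\<Sum>t\<in>T. c t * (\<Sum>a\<in>S. v t a * pair a H))"
    unfolding lincomb_def by (simp add: sum_distrib_right sum_distrib_left mult.assoc sum.swap[of _ S])
  also have "\<dots> = (\<Sum>t\<in>T. c t * pairing (v t) H)"
    by (rule sum.cong[OF refl]) (simp add: pairing_sum[OF fS st])
  finally show ?thesis .
qed

lemma Prim_Delta:
  assumes "x \<in> Prim"
  shows "inH x" "Delta x p = (if snd p = [] then x (fst p) else 0) + (if fst p = [] then x (snd p) else 0)"
proof -
  show "inH x" using assms by (simp add: Prim_def)
  have "Delta x = (\<lambda>(a, b). (if b = [] then x a else 0) + (if a = [] then x b else 0))"
    using assms by (simp add: Prim_def)
  then show "Delta x p = (if snd p = [] then x (fst p) else 0) + (if fst p = [] then x (snd p) else 0)"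
    by (simp add: split_beta)
qed

lemma delta_nil_nil: "delta F ([], []) = (if F = [] then 1 else (0::'k::field))"
proof -
  have "([], []) \<in> cuts F \<longleftrightarrow> F = []"
    using cuts_fst_Nil[of "[]" F] cuts_Nil_in(1)[of F] by auto
  then show ?thesis by (simp add: delta_eq)
qed

lemma Prim_nil:
  assumes "(x :: forest \<Rightarrow> 'k::field) \<in> Prim"
  shows "x [] = 0"
proof -
  have fin: "finite (supp x)" using Prim_Delta(1)[OF assms] by (simp add: inH_def)
  have "Delta x ([], []) = (\<Sum>F\<in>supp x. x F * delta F ([], []))" by (simp add: Delta_def)
  also have "\<dots> = (\<Sum>F\<in>supp x. if F = [] then x F else 0)"
    by (rule sum.cong) (auto simp: delta_nil_nil)
  also have "\<dots> = x []" using fin by (simp add: supp_def)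
  finally have "x [] = x [] + x []" using Prim_Delta(2)[OF assms, of "([], [])"] by simp
  then show ?thesis by (metis add_cancel_right_right)
qed

lemma Prim_vanish:
  assumes "(x :: forest \<Rightarrow> 'k::field) \<in> Prim" "\<And>t. H \<noteq> [t]"
  shows "pairing x H = 0"
proof -
  have ix: "inH x" using Prim_Delta(1)[OF assms(1)] .
  have fin: "finite (supp x)" using ix by (simp add: inH_def)
  show ?thesis
  proof (cases H)
    case Nil
    have "pairing x H = (\<Sum>F\<in>supp x. if F = [] then x F else 0)"
      unfolding pairing_def Nil by (rule sum.cong) (auto simp: pair_Nil_right)
    also have "\<dots> = 0" using fin Prim_nil[OF assms(1)] by (simp add: supp_def)
    finally show ?thesis .
  next
    case (Cons t R)
    then have Rne: "R \<noteq> []" using assms(2) by auto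
    have "pairing x H = (\<Sum>F\<in>supp x. x F * pair ([t] @ R) F)"
      unfolding pairing_def Cons by (simp add: pair_sym[of _ "t # R"])
    also have "\<dots> = (\<Sum>p\<in>C0 x. Delta x p * (pair R (fst p) * pair [t] (snd p)))"
      by (rule sym, rule PP[OF ix finite_C0[OF ix] subset_refl])
    also have "\<dots> = 0"
    proof (rule sum.neutral, rule ballI)
      fix p assume "p \<in> C0 x"
      show "Delta x p * (pair R (fst p) * pair [t] (snd p)) = 0"
      proof (cases "snd p = []")
        case True
        then show ?thesis by (simp add: pair_Nil_right)
      next
        case False
        show ?thesis
        proof (cases "fst p = []")
          case True
          then show ?thesis using Rne by (simp add: pair_Nil_right)
        next
          case False
          then show ?thesis using \<open>snd p \<noteq> []\<close> Prim_Delta(2)[OF assms(1), of p] by simp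
        qed
      qed
    qed
    finally show ?thesis .
  qed
qed


lemma fdual_prim: "(fdual [t] :: forest \<Rightarrow> 'k::field) \<in> Prim"
proof -
  define f where "f = (fdual [t] :: forest \<Rightarrow> 'k)"
  have hp: "inH f \<and> (\<forall>H. pairing f H = (if [t] = H then 1 else 0))"
    unfolding f_def by (rule fdual_prop)
  have hf: "inH f" and pf: "\<And>H. pairing f H = (if [t] = H then 1 else 0)"
    using hp by auto
  have finf: "finite (supp f)" using hf by (simp add: inH_def)
  define T1 where "T1 = (\<lambda>p :: forest \<times> forest. if snd p = [] then f (fst p) else 0)"
  define T2 where "T2 = (\<lambda>p :: forest \<times> forest. if fst p = [] then f (snd p) else 0)"
  define z where "z = (\<lambda>p. Delta f p - (T1 p + T2 p))"
  define C where "C = C0 f \<union> (supp f \<times> {[]}) \<union> ({[]} \<times> supp f)"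
  have finC: "finite C" unfolding C_def using finite_C0[OF hf] finf by simp
  have T1out: "T1 p = 0" if "p \<notin> supp f \<times> {[]}" for p
    using that unfolding T1_def by (cases p) (auto simp: supp_def)
  have T2out: "T2 p = 0" if "p \<notin> {[]} \<times> supp f" for p
    using that unfolding T2_def by (cases p) (auto simp: supp_def)
  have Dout: "Delta f p = 0" if "p \<notin> C0 f" for p
    using that supp_Delta[of f] by (auto simp: supp_def)
  have szC: "supp z \<subseteq> C"
  proof
    fix p assume p: "p \<in> supp z"
    show "p \<in> C"
    proof (rule ccontr)
      assume "p \<notin> C"
      then have "Delta f p = 0" "T1 p = 0" "T2 p = 0" using Dout T1out T2out unfolding C_def by auto
      then have "z p = 0" unfolding z_def by simp
      then show False using p by (simp add: supp_def)
    qed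
  qed
  have "z = (\<lambda>_. 0)"
  proof (rule inj2)
    show "finite (supp z)" using szC finC finite_subset by blast
  next
    fix A B
    define g where "g = (\<lambda>p :: forest \<times> forest. pair A (fst p) * (pair B (snd p) :: 'k))"
    have "(\<Sum>p\<in>supp z. z p * g p) = (\<Sum>p\<in>C. z p * g p)"
      by (rule sum.mono_neutral_left[OF finC szC]) (auto simp: supp_def)
    also have "\<dots> = (\<Sum>p\<in>C. Delta f p * g p) - (\<Sum>p\<in>C. T1 p * g p) - (\<Sum>p\<in>C. T2 p * g p)"
      unfolding z_def by (simp add: algebra_simps sum_subtractf sum.distrib)
    also have "(\<Sum>p\<in>C. Delta f p * g p) = (if [t] = B @ A then 1 else 0)"
    proof -
      have "(\<Sum>p\<in>C. Delta f p * g p) = (\<Sum>F\<in>supp f. f F * pair (B @ A) F)"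
        unfolding g_def by (rule PP[OF hf finC]) (auto simp: C_def)
      also have "\<dots> = pairing f (B @ A)" unfolding pairing_def by (simp add: pair_sym[of _ "B @ A"])
      finally show ?thesis using pf by simp
    qed
    also have "(\<Sum>p\<in>C. T1 p * g p) = pair B [] * pairing f A"
    proof -
      have "(\<Sum>p\<in>C. T1 p * g p) = (\<Sum>p\<in>supp f \<times> {[]}. T1 p * g p)"
        by (rule sym, rule sum.mono_neutral_left[OF finC]) (auto simp: C_def T1out)
      also have "supp f \<times> {[]} = (\<lambda>a. (a, [])) ` supp f" by auto
      also have "(\<Sum>p\<in>(\<lambda>a. (a, [])) ` supp f. T1 p * g p) = (\<Sum>a\<in>supp f. T1 (a, []) * g (a, []))"
        by (rule sum.reindex_cong[where l="\<lambda>a. (a, [])"]) (auto simp: inj_on_def)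
      also have "\<dots> = (\<Sum>a\<in>supp f. f a * (pair A a * pair B []))"
        by (simp add: T1_def g_def)
      also have "\<dots> = pair B [] * pairing f A"
        unfolding pairing_def by (simp add: sum_distrib_left pair_sym[of _ A] mult.commute mult.left_commute)
      finally show ?thesis .
    qed
    also have "(\<Sum>p\<in>C. T2 p * g p) = pair A [] * pairing f B"
    proof -
      have "(\<Sum>p\<in>C. T2 p * g p) = (\<Sum>p\<in>{[]} \<times> supp f. T2 p * g p)"
        by (rule sym, rule sum.mono_neutral_left[OF finC]) (auto simp: C_def T2out)
      also have "{[]} \<times> supp f = (\<lambda>b. ([], b)) ` supp f" by auto
      also have "(\<Sum>p\<in>(\<lambda>b. ([], b)) ` supp f. T2 p * g p) = (\<Sum>b\<in>supp f. T2 ([], b) * g ([], b))"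
        by (rule sum.reindex_cong[where l="\<lambda>b. ([], b)"]) (auto simp: inj_on_def)
      also have "\<dots> = (\<Sum>b\<in>supp f. f b * (pair A [] * pair B b))"
        by (simp add: T2_def g_def)
      also have "\<dots> = pair A [] * pairing f B"
        unfolding pairing_def by (simp add: sum_distrib_left pair_sym[of _ B] mult.commute mult.left_commute)
      finally show ?thesis .
    qed
    also have "(if [t] = B @ A then 1 else 0) - pair B [] * pairing f A - pair A [] * pairing f B = (0::'k)"
    proof (cases "B = []")
      case True
      then show ?thesis using pf by (simp add: pair_Nil_right)
    next
      case False
      show ?thesis
      proof (cases "A = []")
        case True
        then show ?thesis using pf False by (simp add: pair_Nil_right)
      next
        case False
        have "[t] \<noteq> B @ A" using False \<open>B \<noteq> []\<close> by (cases B) auto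
        then show ?thesis using False \<open>B \<noteq> []\<close> by (simp add: pair_Nil_right)
      qed
    qed
    finally show "(\<Sum>p\<in>supp z. z p * (pair A (fst p) * pair B (snd p))) = 0" unfolding g_def .
  qed
  then have "Delta f = (\<lambda>(a, b). (if b = [] then f a else 0) + (if a = [] then f b else 0))"
    unfolding z_def T1_def T2_def by (auto simp: fun_eq_iff split_beta)
  then show ?thesis using hf unfolding Prim_def f_def by simp
qed

theorem proposition22:
  shows "is_basis_of (\<lambda>t. fdual [t] :: forest \<Rightarrow> 'k::field) UNIV Prim"
  unfolding is_basis_of_def
proof (intro conjI allI impI ballI)
  fix t show "(fdual [t] :: forest \<Rightarrow> 'k) \<in> Prim" by (rule fdual_prim)
next
  fix T :: "ptree set" and c :: "ptree \<Rightarrow> 'k" and i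
  assume fT: "finite T" and "T \<subseteq> UNIV" and lc: "lincomb c (\<lambda>t. fdual [t]) T = (\<lambda>_. 0)" and iT: "i \<in> T"
  have ih: "\<And>t. t \<in> T \<Longrightarrow> inH (fdual [t] :: forest \<Rightarrow> 'k)" using fdual_prop by blast
  have "pairing (lincomb c (\<lambda>t. fdual [t]) T) [i] = (\<Sum>t\<in>T. c t * pairing (fdual [t] :: forest \<Rightarrow> 'k) [i])"
    by (rule pairing_lincomb[OF fT ih])
  also have "\<dots> = (\<Sum>t\<in>T. if t = i then c t else 0)"
    by (rule sum.cong[OF refl]) (simp add: fdual_prop)
  also have "\<dots> = c i" using fT iT by simp
  finally have "c i = pairing (\<lambda>_. 0 :: 'k) [i]" using lc by simp
  then show "c i = 0" by (simp add: pairing_def supp_def)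
next
  fix x :: "forest \<Rightarrow> 'k" assume xP: "x \<in> Prim"
  have ix: "inH x" using Prim_Delta(1)[OF xP] .
  have finx: "finite (supp x)" using ix by (simp add: inH_def)
  define T where "T = {t. pairing x [t] \<noteq> 0}"
  define c where "c = (\<lambda>t. pairing x [t])"
  define W where "W = (\<Union>F\<in>supp x. {G. w G = w F})"
  have finW: "finite W" unfolding W_def using finx finite_w_eq by simp
  have TW: "T \<subseteq> (\<lambda>t. [t]) -` W"
  proof
    fix t assume "t \<in> T"
    then have "(\<Sum>F\<in>supp x. x F * pair F [t]) \<noteq> 0" unfolding T_def pairing_def by simp
    then obtain F where F: "F \<in> supp x" "x F * pair F [t] \<noteq> 0"
      by (meson sum.not_neutral_contains_not_neutral)
    then have "pair F [t] \<noteq> (0::'k)" by auto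
    then have "w F = w [t]" by (rule pair_w)
    then show "t \<in> (\<lambda>t. [t]) -` W" unfolding W_def using F(1) by (auto intro!: bexI[of _ F])
  qed
  have fT: "finite T"
    by (rule finite_subset[OF TW finite_vimageI[OF finW]]) (auto simp: inj_def)
  have ih: "\<And>t. t \<in> T \<Longrightarrow> inH (fdual [t] :: forest \<Rightarrow> 'k)" using fdual_prop by blast
  define y where "y = lincomb c (\<lambda>t. fdual [t] :: forest \<Rightarrow> 'k) T"
  have iy: "inH y" unfolding y_def by (rule inH_lincomb(2)[OF fT ih])
  have py: "pairing y H = pairing x H" for H
  proof -
    have "pairing y H = (\<Sum>t\<in>T. c t * pairing (fdual [t] :: forest \<Rightarrow> 'k) H)"
      unfolding y_def by (rule pairing_lincomb[OF fT ih])
    also have "\<dots> = (\<Sum>t\<in>T. if [t] = H then c t else 0)"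
      by (rule sum.cong[OF refl]) (simp add: fdual_prop)
    also have "\<dots> = pairing x H"
    proof (cases "\<exists>s. H = [s]")
      case True
      then obtain s where s: "H = [s]" by blast
      have "(\<Sum>t\<in>T. if [t] = H then c t else 0) = (\<Sum>t\<in>T. if t = s then c t else 0)"
        using s by (intro sum.cong) auto
      also have "\<dots> = (if s \<in> T then c s else 0)" using fT by simp
      also have "\<dots> = pairing x H" using s unfolding T_def c_def by auto
      finally show ?thesis .
    next
      case False
      then have "pairing x H = 0" using Prim_vanish[OF xP] by blast
      moreover have "(\<Sum>t\<in>T. if [t] = H then c t else 0) = 0" using False by (intro sum.neutral) auto
      ultimately show ?thesis by simp
    qed
    finally show ?thesis .
  qed
  have "(\<lambda>a. x a - y a) = (\<lambda>_. 0)"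
  proof (rule inj_pairing)
    have "supp (\<lambda>a. x a - y a) \<subseteq> supp x \<union> supp y" unfolding supp_def by auto
    moreover have "finite (supp x \<union> supp y)" using ix iy by (simp add: inH_def)
    ultimately show "inH (\<lambda>a. x a - y a)" unfolding inH_def by (rule finite_subset)
  next
    fix H show "pairing (\<lambda>a. x a - y a) H = 0" using pairing_diff[OF ix iy, of H] py[of H] by simp
  qed
  then have "x = y"
  proof -
    assume eq: "(\<lambda>a. x a - y a) = (\<lambda>_. 0)"
    show "x = y"
    proof (rule ext)
      fix a
      have "x a - y a = 0" using fun_cong[OF eq, of a] by simp
      then show "x a = y a" by simp
    qed
  qed
  then have "finite T \<and> T \<subseteq> UNIV \<and> x = lincomb c (\<lambda>t. fdual [t]) T"
    using fT unfolding y_def by simp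
  then show "\<exists>T c. finite T \<and> T \<subseteq> UNIV \<and> x = lincomb c (\<lambda>t. fdual [t]) T"
    by (intro exI[where x=T] exI[where x=c])
qed

end
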